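(* Let $\mathcal X\subset\mathbb R^d$ be bounded with Lebesgue measure $1$, let $g:\mathcal X\to[g_{\min},g_{\max}]$ with $0<g_{\min}<g_{\max}<\infty$ and $\|g\|_{L^2(\mathcal X)}=1$, and let $w:[0,\infty)\to[0,\infty)$ be bounded, continuous, with unique minimiser $w(0)=0$ and $\|w\|_\infty\le W$ for some fixed $W<\infty$ independent of $D,N$. Let $\mathscr G(\theta)(x)=\sqrt{w(\|\theta\|_{\mathbb R^D})}\,g(x)$ and consider the regression model $Y_i=\mathscr G(\theta)(X_i)+\varepsilon_i$ at ground truth $\theta_0=0$ (so $Y_i=\varepsilon_i$), with $X_i$ i.i.d. uniform on $\mathcal X$, $\varepsilon_i$ i.i.d. $\mathcal N(0,1)$ independent, law $P_0^N$. Let $\Pi=\Pi_N$ be a sequence of prior probability measures on $\mathbb R^D$ and $\Pi(\cdot\mid Z^{(N)})$ the posterior $d\Pi(\theta\mid Z^{(N)})\propto e^{\ell_N(\theta)}d\Pi(\theta)$, $\ell_N(\theta)=-\frac12\sum_{i=1}^N|Y_i-\mathscr G(\theta)(X_i)|^2$. (i) Suppose that for some radii $0<s<\sigma$, constants $\varepsilon,\eta,\nu>0$ and all $N$ large enough, \[\frac1N\log\frac{\Pi(\Theta_{s,\eta})}{\Pi(\Theta_{\sigma,\varepsilon})}\le-2\nu-\frac{w_+(\sigma,\varepsilon)-w_-(s,\eta)}2.\] Then with $P_0^N$-probability tending to $1$ as $N\to\infty$, \[\frac{\Pi(\Theta_{s,\eta}\mid Z^{(N)})}{\Pi(\Theta_{\sigma,\varepsilon}\mid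 Z^{(N)})}\le e^{-\nu N}.\] (ii) If in addition $w$ is monotone increasing on $[0,\infty)$ and for some $L>1+\varepsilon$, $\frac1N\log\frac{\Pi(B_L^c)}{\Pi(\Theta_{\sigma,\varepsilon})}\le-2\nu$, then with $P_0^N$-probability tending to $1$, \[\frac{\Pi(B_L^c\mid Z^{(N)})}{\Pi(\Theta_{\sigma,\varepsilon}\mid Z^{(N)})}\le e^{-\nu N}.\]
   Context: $\Theta_{r,\epsilon}=\{\theta\in\mathbb R^D:\|\theta\|_{\mathbb R^D}\in(r,r+\epsilon)\}$, $B_L=\{\theta:\|\theta\|_{\mathbb R^D}\le L\}$. For $r\ge0,\epsilon>0$: $w_-(r,\epsilon)=\inf_{u\in(r,r+\epsilon)}w(u)$, $w_+(r,\epsilon)=\sup_{u\in(r,r+\epsilon)}w(u)$. *)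

theory Defs
  imports "HOL-Probability.Probability"
begin

text \<open>Parameter vectors in R^D are represented as functions nat => real whose
  coordinates i >= D are irrelevant (priors are required to put all mass on
  vectors vanishing outside the first D coordinates). This allows the dimension
  D = D_N to depend on N.\<close>

definition normD :: "nat \<Rightarrow> (nat \<Rightarrow> real) \<Rightarrow> real" where
  "normD D \<theta> = sqrt (\<Sum>i<D. (\<theta> i)\<^sup>2)"

definition Theta :: "nat \<Rightarrow> real \<Rightarrow> real \<Rightarrow> (nat \<Rightarrow> real) set" where
  "Theta D r e = {\<theta>. normD D \<theta> \<in> {r<..<r+e}}"

definition BallC :: "nat \<Rightarrow> real \<Rightarrow> (nat \<Rightarrow> real) set" where
  "BallC D L = {\<theta>. \<not> normD D \<theta> \<le> L}"

definition w_minus :: "(real \<Rightarrow> real) \<Rightarrow> real \<Rightarrow> real \<Rightarrow> real" where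
  "w_minus w r e = (INF u\<in>{r<..<r+e}. w u)"

definition w_plus :: "(real \<Rightarrow> real) \<Rightarrow> real \<Rightarrow> real \<Rightarrow> real" where
  "w_plus w r e = (SUP u\<in>{r<..<r+e}. w u)"

definition P0_single :: "'x::euclidean_space set \<Rightarrow> ('x \<times> real) measure" where
  "P0_single X = uniform_measure lborel X \<Otimes>\<^sub>M density lborel std_normal_density"

definition P0N :: "'x::euclidean_space set \<Rightarrow> nat \<Rightarrow> (nat \<Rightarrow> 'x \<times> real) measure" where
  "P0N X N = PiM {..<N} (\<lambda>_. P0_single X)"

definition loglik :: "(real \<Rightarrow> real) \<Rightarrow> ('x \<Rightarrow> real) \<Rightarrow> nat \<Rightarrow> nat
    \<Rightarrow> (nat \<Rightarrow> 'x \<times> real) \<Rightarrow> (nat \<Rightarrow> real) \<Rightarrow> real" where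
  "loglik w g D N z \<theta> =
     - (1/2) * (\<Sum>i<N. (snd (z i) - sqrt (w (normD D \<theta>)) * g (fst (z i)))\<^sup>2)"

definition posterior :: "(real \<Rightarrow> real) \<Rightarrow> ('x \<Rightarrow> real) \<Rightarrow> nat \<Rightarrow> nat
    \<Rightarrow> (nat \<Rightarrow> real) measure \<Rightarrow> (nat \<Rightarrow> 'x \<times> real) \<Rightarrow> (nat \<Rightarrow> real) set \<Rightarrow> real" where
  "posterior w g D N Pr z A =
     (LINT \<theta>:A|Pr. exp (loglik w g D N z \<theta>)) / (LINT \<theta>|Pr. exp (loglik w g D N z \<theta>))"

text \<open>"With P_0^N-probability tending to 1": the event contains measurable
  events whose probability tends to 1.\<close>
definition whp :: "(nat \<Rightarrow> 'a measure) \<Rightarrow> (nat \<Rightarrow> 'a \<Rightarrow> bool) \<Rightarrow> bool" where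
  "whp P Q = (\<exists>E. (\<forall>N. E N \<in> sets (P N) \<and> (\<forall>z\<in>E N. Q N z))
                 \<and> (\<lambda>N. measure (P N) (E N)) \<longlonglongrightarrow> 1)"

end

theory Submission imports Defs begin


lemma iid_cross:
  fixes P :: "'a measure" and h :: "'a \<Rightarrow> real" and i j N :: nat
  assumes P: "prob_space P" and hm: "h \<in> borel_measurable P"
    and h2: "integrable P (\<lambda>x. (h x)\<^sup>2)" and h0: "integral\<^sup>L P h = 0"
    and ij: "i < N" "j < N"
  shows "integrable (PiM {..<N} (\<lambda>_. P)) (\<lambda>z. h (z i) * h (z j)) \<and>
     integral\<^sup>L (PiM {..<N} (\<lambda>_. P)) (\<lambda>z. h (z i) * h (z j)) = (if i = j then integral\<^sup>L P (\<lambda>x. (h x)\<^sup>2) else 0)"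
proof -
  interpret Pp: prob_space P by (rule P)
  interpret product_prob_space "\<lambda>_::nat. P"
    by (simp add: product_prob_space_def product_prob_space_axioms_def product_sigma_finite_def
        Pp.prob_space_axioms prob_space_imp_sigma_finite)
  have hi: "integrable P h"
    using Pp.square_integrable_imp_integrable[OF hm h2] .
  have one: "integrable P (\<lambda>_. 1::real)" "integral\<^sup>L P (\<lambda>_. 1::real) = 1"
    by (auto simp: Pp.prob_space)
  show ?thesis
  proof (cases "i = j")
    case True
    define f where "f = (\<lambda>k::nat. if k = i then (\<lambda>x. (h x)\<^sup>2) else (\<lambda>_. 1::real))"
    have fi: "\<And>k. k \<in> {..<N} \<Longrightarrow> integrable P (f k)" using h2 one by (auto simp: f_def)
    have eq1: "(\<lambda>z. (\<Prod>k\<in>{..<N}. f k (z k))) = (\<lambda>z. h (z i) * h (z j))"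
    proof
      fix z :: "nat \<Rightarrow> 'a"
      have "(\<Prod>k\<in>{..<N}. f k (z k)) = (\<Prod>k\<in>{i}. f k (z k))"
        by (rule prod.mono_neutral_right) (use ij in \<open>auto simp: f_def\<close>)
      then show "(\<Prod>k\<in>{..<N}. f k (z k)) = h (z i) * h (z j)"
        using True by (simp add: f_def power2_eq_square)
    qed
    have eq2: "(\<Prod>k\<in>{..<N}. integral\<^sup>L P (f k)) = integral\<^sup>L P (\<lambda>x. (h x)\<^sup>2)"
    proof -
      have "(\<Prod>k\<in>{..<N}. integral\<^sup>L P (f k)) = (\<Prod>k\<in>{i}. integral\<^sup>L P (f k))"
        by (rule prod.mono_neutral_right) (use ij one in \<open>auto simp: f_def\<close>)
      then show ?thesis by (simp add: f_def)
    qed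
    show ?thesis
    proof -
      have A: "integrable (PiM {..<N} (\<lambda>_. P)) (\<lambda>z. \<Prod>k\<in>{..<N}. f k (z k))"
        by (rule product_integrable_prod) (auto intro: fi)
      have B: "integral\<^sup>L (PiM {..<N} (\<lambda>_. P)) (\<lambda>z. \<Prod>k\<in>{..<N}. f k (z k)) = (\<Prod>k\<in>{..<N}. integral\<^sup>L P (f k))"
        by (rule product_integral_prod) (auto intro: fi)
      show ?thesis using A B True unfolding eq1 eq2 by simp
    qed
  next
    case False
    define f where "f = (\<lambda>k::nat. if k = i \<or> k = j then h else (\<lambda>_. 1::real))"
    have fi: "\<And>k. k \<in> {..<N} \<Longrightarrow> integrable P (f k)" using hi one by (auto simp: f_def)
    have eq1: "(\<lambda>z. (\<Prod>k\<in>{..<N}. f k (z k))) = (\<lambda>z. h (z i) * h (z j))"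
    proof
      fix z :: "nat \<Rightarrow> 'a"
      have "(\<Prod>k\<in>{..<N}. f k (z k)) = (\<Prod>k\<in>{i,j}. f k (z k))"
        by (rule prod.mono_neutral_right) (use ij in \<open>auto simp: f_def\<close>)
      then show "(\<Prod>k\<in>{..<N}. f k (z k)) = h (z i) * h (z j)"
        using False by (simp add: f_def)
    qed
    have eq2: "(\<Prod>k\<in>{..<N}. integral\<^sup>L P (f k)) = 0"
      by (rule prod_zero) (use ij h0 in \<open>auto simp: f_def\<close>)
    show ?thesis
    proof -
      have A: "integrable (PiM {..<N} (\<lambda>_. P)) (\<lambda>z. \<Prod>k\<in>{..<N}. f k (z k))"
        by (rule product_integrable_prod) (auto intro: fi)
      have B: "integral\<^sup>L (PiM {..<N} (\<lambda>_. P)) (\<lambda>z. \<Prod>k\<in>{..<N}. f k (z k)) = (\<Prod>k\<in>{..<N}. integral\<^sup>L P (f k))"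
        by (rule product_integral_prod) (auto intro: fi)
      show ?thesis using A B False unfolding eq1 eq2 by simp
    qed
  qed
qed

lemma iid_sum_sq:
  fixes P :: "'a measure" and h :: "'a \<Rightarrow> real"
  assumes P: "prob_space P" and hm: "h \<in> borel_measurable P"
    and h2: "integrable P (\<lambda>x. (h x)\<^sup>2)" and h0: "integral\<^sup>L P h = 0"
  shows "integrable (PiM {..<N} (\<lambda>_. P)) (\<lambda>z. (\<Sum>i<N. h (z i))\<^sup>2) \<and>
    integral\<^sup>L (PiM {..<N} (\<lambda>_. P)) (\<lambda>z. (\<Sum>i<N. h (z i))\<^sup>2) = real N * integral\<^sup>L P (\<lambda>x. (h x)\<^sup>2)"
proof -
  have eq: "(\<lambda>z. (\<Sum>i<N. h (z i))\<^sup>2) = (\<lambda>z. \<Sum>i<N. \<Sum>j<N. h (z i) * h (z j))"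
    by (simp add: power2_eq_square sum_product)
  note c = iid_cross[OF P hm h2 h0]
  have ci: "integrable (PiM {..<N} (\<lambda>_. P)) (\<lambda>z. h (z i) * h (z j))" if "i < N" "j < N" for i j
    using c[OF that] by blast
  have int: "integrable (PiM {..<N} (\<lambda>_. P)) (\<lambda>z. \<Sum>i<N. \<Sum>j<N. h (z i) * h (z j))"
    apply (rule Bochner_Integration.integrable_sum) apply (rule Bochner_Integration.integrable_sum) apply (rule ci) by auto
  have "integral\<^sup>L (PiM {..<N} (\<lambda>_. P)) (\<lambda>z. \<Sum>i<N. \<Sum>j<N. h (z i) * h (z j))
     = (\<Sum>i<N. \<Sum>j<N. integral\<^sup>L (PiM {..<N} (\<lambda>_. P)) (\<lambda>z. h (z i) * h (z j)))"
    apply (subst Bochner_Integration.integral_sum)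
     apply (rule Bochner_Integration.integrable_sum, rule ci; simp)
    apply (rule sum.cong[OF refl])
    apply (subst Bochner_Integration.integral_sum)
     apply (rule ci; simp)
    apply simp
    done
  also have "\<dots> = (\<Sum>i<N. \<Sum>j<N. if i = j then integral\<^sup>L P (\<lambda>x. (h x)\<^sup>2) else 0)"
    using c by (intro sum.cong) auto
  also have "\<dots> = real N * integral\<^sup>L P (\<lambda>x. (h x)\<^sup>2)"
    by simp
  finally show ?thesis using int unfolding eq by simp
qed

lemma iid_cheb:
  fixes P :: "'a measure" and h :: "'a \<Rightarrow> real" and N :: nat
  assumes P: "prob_space P" and hm: "h \<in> borel_measurable P"
    and h2: "integrable P (\<lambda>x. (h x)\<^sup>2)" and h0: "integral\<^sup>L P h = 0"
    and d: "\<delta> > 0" and N: "N > 0"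
  shows "measure (PiM {..<N} (\<lambda>_. P)) {z \<in> space (PiM {..<N} (\<lambda>_. P)). \<delta> * real N \<le> \<bar>\<Sum>i<N. h (z i)\<bar>}
     \<le> integral\<^sup>L P (\<lambda>x. (h x)\<^sup>2) / (\<delta>\<^sup>2 * real N)"
proof -
  interpret Pp: prob_space P by (rule P)
  interpret M: prob_space "PiM {..<N} (\<lambda>_. P)" by (rule prob_space_PiM) (simp add: P)
  have hi: "integrable P h"
    using Pp.square_integrable_imp_integrable[OF hm h2] .
  have comp: "integrable (PiM {..<N} (\<lambda>_. P)) (\<lambda>z. h (z i)) \<and> integral\<^sup>L (PiM {..<N} (\<lambda>_. P)) (\<lambda>z. h (z i)) = 0"
    if "i < N" for i
  proof -
    have m: "(\<lambda>\<omega>. \<omega> i) \<in> measurable (PiM {..<N} (\<lambda>_. P)) P"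
      using that by (intro measurable_component_singleton) auto
    have dd: "distr (PiM {..<N} (\<lambda>_. P)) P (\<lambda>\<omega>. \<omega> i) = P"
      using that by (intro distr_PiM_component) (auto simp: P)
    show ?thesis
      using integrable_distr_eq[OF m hm] integral_distr[OF m hm] hi h0 unfolding dd by simp
  qed
  have fm: "(\<lambda>z. \<Sum>i<N. h (z i)) \<in> borel_measurable (PiM {..<N} (\<lambda>_. P))"
    using hm by measurable
  have E0: "integral\<^sup>L (PiM {..<N} (\<lambda>_. P)) (\<lambda>z. \<Sum>i<N. h (z i)) = 0"
    apply (subst Bochner_Integration.integral_sum)
    using comp by auto
  note sq = iid_sum_sq[OF P hm h2 h0, of N]
  have a: "\<delta> * real N > 0" using d N by simp
  have "measure (PiM {..<N} (\<lambda>_. P)) {z \<in> space (PiM {..<N} (\<lambda>_. P)). \<delta> * real N \<le> \<bar>\<Sum>i<N. h (z i)\<bar>}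
     \<le> integral\<^sup>L (PiM {..<N} (\<lambda>_. P)) (\<lambda>z. (\<Sum>i<N. h (z i))\<^sup>2) / (\<delta> * real N)\<^sup>2"
    using M.Chebyshev_inequality[OF fm _ a] sq E0 by simp
  also have "\<dots> = integral\<^sup>L P (\<lambda>x. (h x)\<^sup>2) / (\<delta>\<^sup>2 * real N)"
    using sq N by (simp add: power2_eq_square field_simps)
  finally show ?thesis .
qed



lemma pair_prod:
  fixes a :: "'a \<Rightarrow> real" and b :: "'b \<Rightarrow> real"
  assumes P1: "prob_space M1" and P2: "prob_space M2"
    and ia: "integrable M1 a" and ib: "integrable M2 b"
  shows "integrable (M1 \<Otimes>\<^sub>M M2) (\<lambda>z. a (fst z) * b (snd z)) \<and>
    integral\<^sup>L (M1 \<Otimes>\<^sub>M M2) (\<lambda>z. a (fst z) * b (snd z)) = integral\<^sup>L M1 a * integral\<^sup>L M2 b"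
proof -
  interpret M1: prob_space M1 by (rule P1)
  interpret M2: prob_space M2 by (rule P2)
  interpret pair_sigma_finite M1 M2 by unfold_locales
  have am[measurable]: "a \<in> borel_measurable M1" using ia by auto
  have bm[measurable]: "b \<in> borel_measurable M2" using ib by auto
  have int: "integrable (M1 \<Otimes>\<^sub>M M2) (\<lambda>z. a (fst z) * b (snd z))"
  proof (rule Fubini_integrable)
    show "(\<lambda>z. a (fst z) * b (snd z)) \<in> borel_measurable (M1 \<Otimes>\<^sub>M M2)" by measurable
    have eq: "(\<lambda>x. \<integral>y. norm (a (fst (x, y)) * b (snd (x, y))) \<partial>M2) = (\<lambda>x. \<bar>a x\<bar> * (\<integral>y. \<bar>b y\<bar> \<partial>M2))"
      by (simp add: abs_mult)
    show "integrable M1 (\<lambda>x. \<integral>y. norm (a (fst (x, y)) * b (snd (x, y))) \<partial>M2)"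
      unfolding eq using ia by (intro integrable_mult_left integrable_abs)
    show "AE x in M1. integrable M2 (\<lambda>y. a (fst (x, y)) * b (snd (x, y)))"
      using ib by simp
  qed
  have "integral\<^sup>L (M1 \<Otimes>\<^sub>M M2) (\<lambda>z. a (fst z) * b (snd z)) = (\<integral>x. (\<integral>y. a x * b y \<partial>M2) \<partial>M1)"
    using integral_fst[of "\<lambda>x y. a x * b y"] int by (simp add: case_prod_beta')
  also have "\<dots> = integral\<^sup>L M1 a * integral\<^sup>L M2 b"
    by simp
  finally show ?thesis using int by simp
qed

lemma model_facts:
  fixes X :: "'x::euclidean_space set" and g :: "'x \<Rightarrow> real"
  assumes X_meas: "X \<in> sets lborel" and X_vol: "emeasure lborel X = 1"
    and g_meas: "g \<in> borel_measurable lborel"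
    and g_range: "\<forall>x\<in>X. gmin \<le> g x \<and> g x \<le> gmax"
    and g_L2: "(LINT x:X|lborel. (g x)\<^sup>2) = 1"
  shows "prob_space (P0_single X)"
    and "(\<lambda>p. snd p * g (fst p)) \<in> borel_measurable (P0_single X)"
    and "integrable (P0_single X) (\<lambda>p. (snd p * g (fst p))\<^sup>2)"
    and "integral\<^sup>L (P0_single X) (\<lambda>p. snd p * g (fst p)) = 0"
    and "(\<lambda>p. (g (fst p))\<^sup>2 - 1) \<in> borel_measurable (P0_single X)"
    and "integrable (P0_single X) (\<lambda>p. ((g (fst p))\<^sup>2 - 1)\<^sup>2)"
    and "integral\<^sup>L (P0_single X) (\<lambda>p. (g (fst p))\<^sup>2 - 1) = 0"
proof -
  define U where "U = uniform_measure lborel X"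
  define G where "G = density lborel std_normal_density"
  have P0: "P0_single X = U \<Otimes>\<^sub>M G" by (simp add: P0_single_def U_def G_def)
  have PU: "prob_space U" unfolding U_def
    by (rule prob_space_uniform_measure) (auto simp: X_vol)
  have PG: "prob_space G" unfolding G_def by (rule prob_space_normal_density) simp
  interpret U: prob_space U by (rule PU)
  have sU: "sets U = sets borel" by (simp add: U_def)
  have sG: "sets G = sets borel" by (simp add: G_def)
  have gU[measurable]: "g \<in> borel_measurable U"
    using g_meas by (simp add: measurable_cong_sets[OF sU refl])
  have aeU: "AE x in U. x \<in> X" unfolding U_def
    by (rule AE_uniform_measureI[OF X_meas]) simp
  have bnd: "AE x in U. \<bar>g x\<bar> \<le> \<bar>gmin\<bar> + \<bar>gmax\<bar>"
    using aeU by eventually_elim (use g_range in force)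
  have ig: "integrable U g"
    by (rule U.integrable_const_bound[where B="\<bar>gmin\<bar> + \<bar>gmax\<bar>"]) (use bnd in auto)
  have ig2: "integrable U (\<lambda>x. (g x)\<^sup>2)"
  proof (rule U.integrable_const_bound[where B="(\<bar>gmin\<bar> + \<bar>gmax\<bar>)\<^sup>2"])
    show "AE x in U. norm ((g x)\<^sup>2) \<le> (\<bar>gmin\<bar> + \<bar>gmax\<bar>)\<^sup>2"
      using bnd
    proof eventually_elim
      case (elim x)
      have "\<bar>g x\<bar>\<^sup>2 \<le> (\<bar>gmin\<bar> + \<bar>gmax\<bar>)\<^sup>2" by (rule power_mono[OF elim]) simp
      then show ?case by simp
    qed
  qed simp
  have ig21: "integrable U (\<lambda>x. (g x)\<^sup>2 - 1)" using ig2 by simp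
  have ig22: "integrable U (\<lambda>x. ((g x)\<^sup>2 - 1)\<^sup>2)"
  proof (rule U.integrable_const_bound[where B="((\<bar>gmin\<bar> + \<bar>gmax\<bar>)\<^sup>2 + 1)\<^sup>2"])
    show "AE x in U. norm (((g x)\<^sup>2 - 1)\<^sup>2) \<le> ((\<bar>gmin\<bar> + \<bar>gmax\<bar>)\<^sup>2 + 1)\<^sup>2"
      using bnd
    proof eventually_elim
      case (elim x)
      have "\<bar>g x\<bar>\<^sup>2 \<le> (\<bar>gmin\<bar> + \<bar>gmax\<bar>)\<^sup>2" by (rule power_mono[OF elim]) simp
      then have "(g x)\<^sup>2 \<le> (\<bar>gmin\<bar> + \<bar>gmax\<bar>)\<^sup>2" by simp
      moreover have "0 \<le> (g x)\<^sup>2" by simp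
      ultimately have "\<bar>(g x)\<^sup>2 - 1\<bar> \<le> (\<bar>gmin\<bar> + \<bar>gmax\<bar>)\<^sup>2 + 1" by (simp add: abs_le_iff)
      then have "\<bar>(g x)\<^sup>2 - 1\<bar>\<^sup>2 \<le> ((\<bar>gmin\<bar> + \<bar>gmax\<bar>)\<^sup>2 + 1)\<^sup>2"
        by (rule power_mono) simp
      then show ?case by simp
    qed
  qed simp
  have Ug2: "integral\<^sup>L U (\<lambda>x. (g x)\<^sup>2) = 1"
  proof -
    have "U = density lborel (\<lambda>x. ennreal (indicator X x))"
      unfolding U_def uniform_measure_def X_vol
      by (intro density_cong) (use X_meas in \<open>auto simp: indicator_def\<close>)
    then have "integral\<^sup>L U (\<lambda>x. (g x)\<^sup>2) = (\<integral>x. indicator X x *\<^sub>R (g x)\<^sup>2 \<partial>lborel)"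
      using g_meas X_meas by (simp add: integral_density)
    also have "\<dots> = 1" using g_L2 by (simp add: set_lebesgue_integral_def)
    finally show ?thesis .
  qed
  have iy: "integrable G (\<lambda>y. y)" and iy2: "integrable G (\<lambda>y. y\<^sup>2)" and Gy: "integral\<^sup>L G (\<lambda>y. y) = 0"
  proof -
    have "integrable lborel (\<lambda>x. std_normal_density x * x ^ 1)"
      by (rule integrable_std_normal_moment)
    then show "integrable G (\<lambda>y. y)" unfolding G_def
      by (subst integrable_density) (auto simp: normal_density_nonneg)
    have "integrable lborel (\<lambda>x. std_normal_density x * x ^ 2)"
      by (rule integrable_std_normal_moment)
    then show "integrable G (\<lambda>y. y\<^sup>2)" unfolding G_def
      by (subst integrable_density) (auto simp: normal_density_nonneg)
    have "integral\<^sup>L lborel (\<lambda>x. std_normal_density x * x ^ (2 * 0 + 1)) = 0"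
      by (rule integral_std_normal_moment_odd)
    then show "integral\<^sup>L G (\<lambda>y. y) = 0" unfolding G_def
      by (subst integral_density) (auto simp: normal_density_nonneg)
  qed
  have i1: "integrable G (\<lambda>_. 1::real)" "integral\<^sup>L G (\<lambda>_. 1::real) = 1"
  proof -
    interpret Gp: prob_space G by (rule PG)
    show "integrable G (\<lambda>_. 1::real)" "integral\<^sup>L G (\<lambda>_. 1::real) = 1" by (simp_all add: Gp.prob_space)
  qed
  note pp = pair_prod[OF PU PG]
  show "prob_space (P0_single X)" unfolding P0 by (rule prob_space_pair[OF PU PG])
  have m1: "(\<lambda>p. g (fst p)) \<in> borel_measurable (U \<Otimes>\<^sub>M G)"
    by (rule measurable_compose[OF measurable_fst gU])
  have idG: "(\<lambda>y. y) \<in> borel_measurable G"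
    by (simp add: measurable_cong_sets[OF sG refl])
  have m2: "(\<lambda>p. snd p) \<in> borel_measurable (U \<Otimes>\<^sub>M G)"
    by (rule measurable_compose[OF measurable_snd idG])
  show "(\<lambda>p. snd p * g (fst p)) \<in> borel_measurable (P0_single X)"
    unfolding P0 using m1 m2 by (rule borel_measurable_times[rotated])
  show "(\<lambda>p. (g (fst p))\<^sup>2 - 1) \<in> borel_measurable (P0_single X)"
    unfolding P0 using m1 by measurable
  show "integrable (P0_single X) (\<lambda>p. (snd p * g (fst p))\<^sup>2)"
    using pp[OF ig2 iy2] unfolding P0 by (simp add: power_mult_distrib mult.commute)
  show "integral\<^sup>L (P0_single X) (\<lambda>p. snd p * g (fst p)) = 0"
    using pp[OF ig iy] Gy unfolding P0 by (simp add: mult.commute)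
  show "integrable (P0_single X) (\<lambda>p. ((g (fst p))\<^sup>2 - 1)\<^sup>2)"
    using pp[OF ig22 i1(1)] unfolding P0 by simp
  show "integral\<^sup>L (P0_single X) (\<lambda>p. (g (fst p))\<^sup>2 - 1) = 0"
    using pp[OF ig21 i1(1)] i1(2) Ug2 unfolding P0 by (simp add: Bochner_Integration.integral_diff[OF ig2] U.prob_space)
qed
lemma event_prob:
  fixes X :: "'x::euclidean_space set" and g :: "'x \<Rightarrow> real"
  assumes X_meas: "X \<in> sets lborel" and X_vol: "emeasure lborel X = 1"
    and g_meas: "g \<in> borel_measurable lborel"
    and g_range: "\<forall>x\<in>X. gmin \<le> g x \<and> g x \<le> gmax"
    and g_L2: "(LINT x:X|lborel. (g x)\<^sup>2) = 1"
    and d: "\<delta> > 0"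
  shows "\<exists>E. (\<forall>N. E N \<in> sets (P0N X N) \<and> (\<forall>z\<in>E N. \<bar>\<Sum>i<N. snd (z i) * g (fst (z i))\<bar> \<le> \<delta> * real N
              \<and> \<bar>\<Sum>i<N. (g (fst (z i)))\<^sup>2 - 1\<bar> \<le> \<delta> * real N))
           \<and> (\<lambda>N. measure (P0N X N) (E N)) \<longlonglongrightarrow> 1"
proof -
  note mf = model_facts[OF X_meas X_vol g_meas g_range g_L2]
  define P where "P = P0_single X"
  define hS where "hS = (\<lambda>p. snd p * g (fst p))"
  define hQ where "hQ = (\<lambda>p::'x \<times> real. (g (fst p))\<^sup>2 - 1)"
  have PP: "prob_space P" using mf unfolding P_def by blast
  have hSm[measurable]: "hS \<in> borel_measurable P" using mf unfolding P_def hS_def by blast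
  have hQm[measurable]: "hQ \<in> borel_measurable P" using mf unfolding P_def hQ_def by blast
  have hS2: "integrable P (\<lambda>x. (hS x)\<^sup>2)" using mf unfolding P_def hS_def by blast
  have hQ2: "integrable P (\<lambda>x. (hQ x)\<^sup>2)" using mf unfolding P_def hQ_def by blast
  have hS0: "integral\<^sup>L P hS = 0" using mf unfolding P_def hS_def by blast
  have hQ0: "integral\<^sup>L P hQ = 0" using mf unfolding P_def hQ_def by blast
  define M where "M = (\<lambda>N::nat. PiM {..<N} (\<lambda>_. P))"
  have M: "P0N X N = M N" for N by (simp add: P0N_def M_def P_def)
  define E where "E = (\<lambda>N. {z \<in> space (M N). \<bar>\<Sum>i<N. hS (z i)\<bar> < \<delta> * real N \<and> \<bar>\<Sum>i<N. hQ (z i)\<bar> < \<delta> * real N})"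
  define V where "V = integral\<^sup>L P (\<lambda>x. (hS x)\<^sup>2) + integral\<^sup>L P (\<lambda>x. (hQ x)\<^sup>2)"
  have Es: "E N \<in> sets (M N)" for N unfolding E_def M_def by measurable
  have low: "1 - V / \<delta>\<^sup>2 * (1 / real N) \<le> measure (M N) (E N)" if N: "N > 0" for N
  proof -
    interpret MN: prob_space "M N" unfolding M_def by (rule prob_space_PiM) (simp add: PP)
    define A1 where "A1 = {z \<in> space (M N). \<delta> * real N \<le> \<bar>\<Sum>i<N. hS (z i)\<bar>}"
    define A2 where "A2 = {z \<in> space (M N). \<delta> * real N \<le> \<bar>\<Sum>i<N. hQ (z i)\<bar>}"
    have A1s: "A1 \<in> sets (M N)" unfolding A1_def M_def by measurable
    have A2s: "A2 \<in> sets (M N)" unfolding A2_def M_def by measurable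
    have c1: "measure (M N) A1 \<le> integral\<^sup>L P (\<lambda>x. (hS x)\<^sup>2) / (\<delta>\<^sup>2 * real N)"
      unfolding A1_def M_def by (rule iid_cheb[OF PP hSm hS2 hS0 d N])
    have c2: "measure (M N) A2 \<le> integral\<^sup>L P (\<lambda>x. (hQ x)\<^sup>2) / (\<delta>\<^sup>2 * real N)"
      unfolding A2_def M_def by (rule iid_cheb[OF PP hQm hQ2 hQ0 d N])
    have "space (M N) \<subseteq> E N \<union> (A1 \<union> A2)" unfolding E_def A1_def A2_def by auto
    then have "1 \<le> measure (M N) (E N \<union> (A1 \<union> A2))"
      using MN.finite_measure_mono[of "space (M N)" "E N \<union> (A1 \<union> A2)"] Es A1s A2s MN.prob_space
      by auto
    also have "\<dots> \<le> measure (M N) (E N) + (measure (M N) A1 + measure (M N) A2)"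
      using measure_Un_le[OF Es[of N] sets.Un[OF A1s A2s]] measure_Un_le[OF A1s A2s] by linarith
    finally have "1 - (measure (M N) A1 + measure (M N) A2) \<le> measure (M N) (E N)" by linarith
    moreover have "measure (M N) A1 + measure (M N) A2 \<le> V / \<delta>\<^sup>2 * (1 / real N)"
      using c1 c2 unfolding V_def by (simp add: add_divide_distrib)
    ultimately show ?thesis by linarith
  qed
  have up: "measure (M N) (E N) \<le> 1" for N
  proof -
    interpret MN: prob_space "M N" unfolding M_def by (rule prob_space_PiM) (simp add: PP)
    show ?thesis by simp
  qed
  have lim1: "(\<lambda>N. 1 - V / \<delta>\<^sup>2 * (1 / real N)) \<longlonglongrightarrow> 1"
    using tendsto_diff[OF tendsto_const tendsto_mult[OF tendsto_const lim_inverse_n'], of 1 "V / \<delta>\<^sup>2"] by simp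
  have lim: "(\<lambda>N. measure (M N) (E N)) \<longlonglongrightarrow> 1"
  proof (rule tendsto_sandwich[OF _ _ lim1 tendsto_const])
    show "\<forall>\<^sub>F N in sequentially. 1 - V / \<delta>\<^sup>2 * (1 / real N) \<le> measure (M N) (E N)"
      using eventually_gt_at_top[of 0] by eventually_elim (rule low)
    show "\<forall>\<^sub>F N in sequentially. measure (M N) (E N) \<le> 1" by (simp add: up)
  qed
  show ?thesis
  proof (intro exI[of _ E] conjI allI)
    fix N show "E N \<in> sets (P0N X N)" using Es by (simp add: M)
    show "\<forall>z\<in>E N. \<bar>\<Sum>i<N. snd (z i) * g (fst (z i))\<bar> \<le> \<delta> * real N
              \<and> \<bar>\<Sum>i<N. (g (fst (z i)))\<^sup>2 - 1\<bar> \<le> \<delta> * real N"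
      unfolding E_def hS_def hQ_def by auto
  next
    show "(\<lambda>N. measure (P0N X N) (E N)) \<longlonglongrightarrow> 1" using lim by (simp add: M)
  qed
qed
lemma normD_cont: "continuous_on UNIV (normD D)"
  unfolding normD_def[abs_def] by (intro continuous_intros continuous_on_product_coordinates)

lemma normD_meas[measurable]: "normD D \<in> borel_measurable borel"
  by (rule borel_measurable_continuous_onI[OF normD_cont])

lemma normD_nonneg: "0 \<le> normD D \<theta>"
  by (simp add: normD_def sum_nonneg)

lemma loglik_eq:
  assumes "0 \<le> w (normD D \<theta>)"
  shows "loglik w g D N z \<theta> = -(1/2) * (\<Sum>i<N. (snd (z i))\<^sup>2)
     + sqrt (w (normD D \<theta>)) * (\<Sum>i<N. snd (z i) * g (fst (z i)))
     - w (normD D \<theta>) * (\<Sum>i<N. (g (fst (z i)))\<^sup>2) / 2"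
proof -
  define t where "t = sqrt (w (normD D \<theta>))"
  have t2: "t\<^sup>2 = w (normD D \<theta>)" unfolding t_def using assms by simp
  have "(\<Sum>i<N. (snd (z i) - t * g (fst (z i)))\<^sup>2)
     = (\<Sum>i<N. (snd (z i))\<^sup>2) - 2 * t * (\<Sum>i<N. snd (z i) * g (fst (z i))) + t\<^sup>2 * (\<Sum>i<N. (g (fst (z i)))\<^sup>2)"
    by (simp add: power2_diff sum.distrib sum_subtractf sum_distrib_left algebra_simps power_mult_distrib)
  moreover have "loglik w g D N z \<theta> = -(1/2) * (\<Sum>i<N. (snd (z i) - t * g (fst (z i)))\<^sup>2)"
    unfolding loglik_def t_def ..
  ultimately show ?thesis unfolding t_def[symmetric] using t2 by (simp add: algebra_simps)
qed

lemma loglik_le0: "loglik w g D N z \<theta> \<le> 0"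
  unfolding loglik_def by (simp add: sum_nonneg)

lemma loglik_meas:
  assumes w_cont: "continuous_on {0..} w"
  shows "(\<lambda>\<theta>. exp (loglik w g D N z \<theta>)) \<in> borel_measurable borel"
proof -
  define \<phi> where "\<phi> = (\<lambda>r. exp (- (1/2) * (\<Sum>i<N. (snd (z i) - sqrt (w (max 0 r)) * g (fst (z i)))\<^sup>2)))"
  have wc: "continuous_on UNIV (\<lambda>r. w (max 0 r))"
    by (rule continuous_on_compose2[OF w_cont, of UNIV "\<lambda>r. max 0 r"]) (auto intro!: continuous_intros)
  have "continuous_on UNIV \<phi>"
    unfolding \<phi>_def by (intro continuous_intros continuous_on_compose2[OF continuous_on_real_sqrt wc]) auto
  then have "(\<lambda>\<theta>. \<phi> (normD D \<theta>)) \<in> borel_measurable borel"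
    by (rule borel_measurable_continuous_on) simp
  moreover have "(\<lambda>\<theta>. \<phi> (normD D \<theta>)) = (\<lambda>\<theta>. exp (loglik w g D N z \<theta>))"
    by (auto simp: \<phi>_def loglik_def normD_nonneg max_absorb2)
  ultimately show ?thesis by simp
qed

lemma ratio_bound:
  fixes Pr :: "'a measure" and f :: "'a \<Rightarrow> real"
  assumes Pr: "prob_space Pr" and fm: "f \<in> borel_measurable Pr"
    and f01: "\<And>\<theta>. 0 \<le> f \<theta> \<and> f \<theta> \<le> 1"
    and As: "A \<in> sets Pr" and Bs: "B \<in> sets Pr" and B's: "B' \<in> sets Pr" and B'B: "B' \<subseteq> B"
    and fa: "\<And>\<theta>. \<theta> \<in> A \<Longrightarrow> f \<theta> \<le> a" and a0: "0 \<le> a"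
    and fb: "\<And>\<theta>. \<theta> \<in> B' \<Longrightarrow> b \<le> f \<theta>" and b0: "0 < b"
    and mB': "measure Pr B' > 0"
  shows "((LINT \<theta>:A|Pr. f \<theta>) / I) / ((LINT \<theta>:B|Pr. f \<theta>) / I) \<le> a * measure Pr A / (b * measure Pr B')"
proof -
  interpret prob_space Pr by (rule Pr)
  have iA: "integrable Pr (\<lambda>\<theta>. indicator A \<theta> *\<^sub>R f \<theta>)"
    by (rule integrable_const_bound[where B=1]) (use f01 fm As in \<open>auto simp: indicator_def\<close>)
  have iB: "integrable Pr (\<lambda>\<theta>. indicator B \<theta> *\<^sub>R f \<theta>)"
    by (rule integrable_const_bound[where B=1]) (use f01 fm Bs in \<open>auto simp: indicator_def\<close>)
  have indI: "integrable Pr (\<lambda>\<theta>. c * indicator C \<theta> :: real)" if "C \<in> sets Pr" for C c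
    by (rule integrable_const_bound[where B="\<bar>c\<bar>"]) (use that in \<open>auto simp: indicator_def\<close>)
  have IA: "(LINT \<theta>:A|Pr. f \<theta>) \<le> a * measure Pr A"
  proof -
    have "(LINT \<theta>:A|Pr. f \<theta>) \<le> (\<integral>\<theta>. a * indicator A \<theta> \<partial>Pr)"
      unfolding set_lebesgue_integral_def
      by (rule integral_mono[OF iA indI[OF As]]) (use As fa in \<open>auto simp: indicator_def\<close>)
    also have "\<dots> = a * measure Pr A" using As by (simp add: integral_mult_right_zero)
    finally show ?thesis .
  qed
  have IA0: "0 \<le> (LINT \<theta>:A|Pr. f \<theta>)"
    unfolding set_lebesgue_integral_def by (rule Bochner_Integration.integral_nonneg) (use f01 in \<open>auto simp: indicator_def\<close>)
  have IB: "b * measure Pr B' \<le> (LINT \<theta>:B|Pr. f \<theta>)"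
  proof -
    have "b * measure Pr B' = (\<integral>\<theta>. b * indicator B' \<theta> \<partial>Pr)" using B's by (simp add: integral_mult_right_zero)
    also have "\<dots> \<le> (LINT \<theta>:B|Pr. f \<theta>)"
      unfolding set_lebesgue_integral_def
      by (rule integral_mono[OF indI[OF B's] iB]) (use B's B'B fb f01 b0 in \<open>auto simp: indicator_def\<close>)
    finally show ?thesis .
  qed
  have pos: "0 < b * measure Pr B'" using b0 mB' by simp
  show ?thesis
  proof (cases "I = 0")
    case True
    then show ?thesis using a0 pos by (simp add: measure_nonneg)
  next
    case False
    then have "((LINT \<theta>:A|Pr. f \<theta>) / I) / ((LINT \<theta>:B|Pr. f \<theta>) / I) = (LINT \<theta>:A|Pr. f \<theta>) / (LINT \<theta>:B|Pr. f \<theta>)"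
      by simp
    also have "\<dots> \<le> a * measure Pr A / (b * measure Pr B')"
      by (rule frac_le) (use IA IA0 IB pos a0 in \<open>auto simp: measure_nonneg\<close>)
    finally show ?thesis .
  qed
qed
lemma loglik_upper:
  assumes "0 \<le> lo" "lo \<le> w (normD D \<theta>)" "w (normD D \<theta>) \<le> W"
  shows "loglik w g D N z \<theta> \<le> -(1/2) * (\<Sum>i<N. (snd (z i))\<^sup>2)
     + sqrt W * \<bar>\<Sum>i<N. snd (z i) * g (fst (z i))\<bar> - lo * (\<Sum>i<N. (g (fst (z i)))\<^sup>2) / 2"
proof -
  define u where "u = w (normD D \<theta>)"
  define Sv where "Sv = (\<Sum>i<N. snd (z i) * g (fst (z i)))"
  define Qv where "Qv = (\<Sum>i<N. (g (fst (z i)))\<^sup>2)"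
  have u0: "0 \<le> u" using assms unfolding u_def by linarith
  have Q0: "0 \<le> Qv" unfolding Qv_def by (simp add: sum_nonneg)
  have "sqrt u * Sv \<le> sqrt u * \<bar>Sv\<bar>" by (rule mult_left_mono) (simp_all add: u0)
  also have "\<dots> \<le> sqrt W * \<bar>Sv\<bar>" using assms(3) unfolding u_def by (simp add: mult_right_mono)
  finally have 1: "sqrt u * Sv \<le> sqrt W * \<bar>Sv\<bar>" .
  have 2: "lo * Qv \<le> u * Qv" using assms(2) Q0 unfolding u_def by (simp add: mult_right_mono)
  show ?thesis
    using loglik_eq[of w D \<theta> g N z] u0 1 2 unfolding u_def Sv_def Qv_def by linarith
qed

lemma loglik_lower:
  assumes "0 \<le> w (normD D \<theta>)" "w (normD D \<theta>) \<le> hi" "hi \<le> W"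
  shows "-(1/2) * (\<Sum>i<N. (snd (z i))\<^sup>2)
     - sqrt W * \<bar>\<Sum>i<N. snd (z i) * g (fst (z i))\<bar> - hi * (\<Sum>i<N. (g (fst (z i)))\<^sup>2) / 2
     \<le> loglik w g D N z \<theta>"
proof -
  define u where "u = w (normD D \<theta>)"
  define Sv where "Sv = (\<Sum>i<N. snd (z i) * g (fst (z i)))"
  define Qv where "Qv = (\<Sum>i<N. (g (fst (z i)))\<^sup>2)"
  have u0: "0 \<le> u" using assms unfolding u_def by linarith
  have Q0: "0 \<le> Qv" unfolding Qv_def by (simp add: sum_nonneg)
  have "- (sqrt W * \<bar>Sv\<bar>) \<le> - (sqrt u * \<bar>Sv\<bar>)" using assms unfolding u_def by (simp add: mult_right_mono)
  also have "\<dots> \<le> sqrt u * Sv"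
    by (metis abs_ge_minus_self abs_mult abs_of_nonneg minus_le_iff real_sqrt_ge_zero u0)
  finally have 1: "- (sqrt W * \<bar>Sv\<bar>) \<le> sqrt u * Sv" .
  have 2: "u * Qv \<le> hi * Qv" using assms(2) Q0 unfolding u_def by (simp add: mult_right_mono)
  show ?thesis
    using loglik_eq[of w D \<theta> g N z] u0 1 2 unfolding u_def Sv_def Qv_def by linarith
qed
lemma Theta_sets: "Theta D r e \<in> sets borel"
proof -
  have "Theta D r e = normD D -` {r<..<r+e}" by (auto simp: Theta_def)
  then show ?thesis using measurable_sets_borel[OF normD_meas] by simp
qed

lemma BallC_sets: "BallC D L \<in> sets borel"
proof -
  have "BallC D L = normD D -` {L<..}" by (auto simp: BallC_def)
  then show ?thesis using measurable_sets_borel[OF normD_meas] by simp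
qed

lemma w_minus_facts:
  assumes w_range: "\<forall>u\<ge>0. 0 \<le> w u \<and> w u \<le> W" and r: "0 \<le> r" and e: "0 < e"
  shows "\<And>u. u \<in> {r<..<r+e} \<Longrightarrow> w_minus w r e \<le> w u" "0 \<le> w_minus w r e" "w_minus w r e \<le> W"
proof -
  have bdd: "bdd_below (w ` {r<..<r+e})" by (rule bdd_belowI2[where m=0]) (use w_range r in auto)
  show le: "w_minus w r e \<le> w u" if "u \<in> {r<..<r+e}" for u
    unfolding w_minus_def by (rule cINF_lower[OF bdd that])
  have ne: "{r<..<r+e} \<noteq> {}" using e by auto
  show "0 \<le> w_minus w r e"
    unfolding w_minus_def by (rule cINF_greatest[OF ne]) (use w_range r in auto)
  have m: "r + e/2 \<in> {r<..<r+e}" using e by auto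
  have "0 \<le> r + e/2" using r e by simp
  then have "w (r + e/2) \<le> W" using w_range by blast
  then show "w_minus w r e \<le> W" using le[OF m] by linarith
qed

lemma w_plus_facts:
  assumes w_range: "\<forall>u\<ge>0. 0 \<le> w u \<and> w u \<le> W" and r: "0 \<le> r" and e: "0 < e"
  shows "\<And>u. u \<in> {r<..<r+e} \<Longrightarrow> w u \<le> w_plus w r e" "0 \<le> w_plus w r e" "w_plus w r e \<le> W"
proof -
  have bdd: "bdd_above (w ` {r<..<r+e})" by (rule bdd_aboveI2[where M=W]) (use w_range r in auto)
  show le: "w u \<le> w_plus w r e" if "u \<in> {r<..<r+e}" for u
    unfolding w_plus_def by (rule cSUP_upper[OF that bdd])
  have ne: "{r<..<r+e} \<noteq> {}" using e by auto
  show "w_plus w r e \<le> W"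
    unfolding w_plus_def by (rule cSUP_least[OF ne]) (use w_range r in auto)
  have m: "r + e/2 \<in> {r<..<r+e}" using e by auto
  have "0 \<le> r + e/2" using r e by simp
  then have "0 \<le> w (r + e/2)" using w_range by blast
  then show "0 \<le> w_plus w r e" using le[OF m] by linarith
qed

lemma part_i_det:
  fixes Pr :: "(nat \<Rightarrow> real) measure" and g :: "'x \<Rightarrow> real" and N :: nat
  assumes Pr: "prob_space Pr" and sPr: "sets Pr = sets borel"
    and w_cont: "continuous_on {0..} w"
    and w_range: "\<forall>u\<ge>0. 0 \<le> w u \<and> w u \<le> W"
    and s: "0 < s" "s < \<sigma>" and e: "\<epsilon> > 0" "\<eta> > 0" and nu: "\<nu> > 0"
    and N: "N > 0"
    and mB: "measure Pr (Theta D \<sigma> \<epsilon>) > 0"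
    and hyp: "measure Pr (Theta D s \<eta>) = 0 \<or>
         ln (measure Pr (Theta D s \<eta>) / measure Pr (Theta D \<sigma> \<epsilon>)) / real N
           \<le> - 2 * \<nu> - (w_plus w \<sigma> \<epsilon> - w_minus w s \<eta>) / 2"
    and S: "\<bar>\<Sum>i<N. snd (z i) * g (fst (z i))\<bar> \<le> \<delta> * real N"
    and Q: "\<bar>\<Sum>i<N. (g (fst (z i)))\<^sup>2 - 1\<bar> \<le> \<delta> * real N"
    and d: "0 \<le> \<delta>" "sqrt W * \<delta> \<le> \<nu> / 4" "W * \<delta> \<le> \<nu> / 4"
  shows "posterior w g D N Pr z (Theta D s \<eta>) / posterior w g D N Pr z (Theta D \<sigma> \<epsilon>) \<le> exp (- \<nu> * real N)"
proof -
  define Sv where "Sv = (\<Sum>i<N. snd (z i) * g (fst (z i)))"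
  define Qv where "Qv = (\<Sum>i<N. (g (fst (z i)))\<^sup>2)"
  define C where "C = -(1/2) * (\<Sum>i<N. (snd (z i))\<^sup>2)"
  define wm where "wm = w_minus w s \<eta>"
  define wp where "wp = w_plus w \<sigma> \<epsilon>"
  define A where "A = Theta D s \<eta>"
  define B where "B = Theta D \<sigma> \<epsilon>"
  define f where "f = (\<lambda>\<theta>. exp (loglik w g D N z \<theta>))"
  define a where "a = exp (C + sqrt W * \<bar>Sv\<bar> - wm * Qv / 2)"
  define b where "b = exp (C - sqrt W * \<bar>Sv\<bar> - wp * Qv / 2)"
  have W0: "0 \<le> W" using w_range[rule_format, of 0] by simp
  have wN: "0 \<le> w (normD D \<theta>)" "w (normD D \<theta>) \<le> W" for \<theta>
    using w_range[rule_format, OF normD_nonneg[of D \<theta>]] by simp_all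
  have s0: "0 \<le> s" and \<sigma>0: "0 \<le> \<sigma>" using s by linarith+
  note wm = w_minus_facts[OF w_range s0 e(2), folded wm_def]
  note wp = w_plus_facts[OF w_range \<sigma>0 e(1), folded wp_def]
  have fm: "f \<in> borel_measurable Pr"
    unfolding f_def measurable_cong_sets[OF sPr refl] by (rule loglik_meas[OF w_cont])
  have f01: "0 \<le> f \<theta> \<and> f \<theta> \<le> 1" for \<theta>
    unfolding f_def using loglik_le0[of w g D N z \<theta>] by simp
  have As: "A \<in> sets Pr" unfolding A_def sPr by (rule Theta_sets)
  have Bs: "B \<in> sets Pr" unfolding B_def sPr by (rule Theta_sets)
  have fa: "f \<theta> \<le> a" if "\<theta> \<in> A" for \<theta>
  proof -
    have r: "normD D \<theta> \<in> {s<..<s+\<eta>}" using that by (simp add: A_def Theta_def)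
    have "loglik w g D N z \<theta> \<le> C + sqrt W * \<bar>Sv\<bar> - wm * Qv / 2"
      unfolding C_def Sv_def Qv_def
      by (rule loglik_upper[where lo=wm and w=w and D=D and \<theta>=\<theta> and W=W, OF wm(2) wm(1)[OF r] wN(2)])
    then show ?thesis unfolding f_def a_def by simp
  qed
  have fb: "b \<le> f \<theta>" if "\<theta> \<in> B" for \<theta>
  proof -
    have r: "normD D \<theta> \<in> {\<sigma><..<\<sigma>+\<epsilon>}" using that by (simp add: B_def Theta_def)
    have "C - sqrt W * \<bar>Sv\<bar> - wp * Qv / 2 \<le> loglik w g D N z \<theta>"
      unfolding C_def Sv_def Qv_def
      by (rule loglik_lower[where hi=wp and w=w and D=D and \<theta>=\<theta> and W=W, OF wN(1) wp(1)[OF r] wp(3)])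
    then show ?thesis unfolding f_def b_def by simp
  qed
  have rb: "posterior w g D N Pr z A / posterior w g D N Pr z B \<le> a * measure Pr A / (b * measure Pr B)"
    unfolding posterior_def f_def[symmetric]
    by (rule ratio_bound[OF Pr fm f01 As Bs Bs order_refl fa _ fb _ mB[folded B_def]]) (auto simp: a_def b_def)
  have ab: "a / b = exp (2 * sqrt W * \<bar>Sv\<bar> + (wp - wm) * Qv / 2)"
  proof -
    have "a / b = exp ((C + sqrt W * \<bar>Sv\<bar> - wm * Qv / 2) - (C - sqrt W * \<bar>Sv\<bar> - wp * Qv / 2))"
      unfolding a_def b_def by (rule exp_diff[symmetric])
    also have "(C + sqrt W * \<bar>Sv\<bar> - wm * Qv / 2) - (C - sqrt W * \<bar>Sv\<bar> - wp * Qv / 2)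
       = 2 * sqrt W * \<bar>Sv\<bar> + (wp - wm) * Qv / 2"
      by (simp add: field_simps)
    finally show ?thesis .
  qed
  have mA0: "0 \<le> measure Pr A" by simp
  show ?thesis
  proof (cases "measure Pr A = 0")
    case True
    then show ?thesis using rb unfolding A_def B_def
      by (metis (no_types, lifting) div_0 mult_zero_right exp_ge_zero order_trans)
  next
    case False
    then have mA: "measure Pr A > 0" using mA0 by linarith
    define K where "K = - 2 * \<nu> - (wp - wm) / 2"
    have "ln (measure Pr A / measure Pr B) / real N \<le> K"
      using hyp False unfolding K_def A_def B_def wp_def wm_def by auto
    then have "ln (measure Pr A / measure Pr B) \<le> real N * K"
      using N by (simp add: divide_le_eq mult.commute)
    then have rat: "measure Pr A / measure Pr B \<le> exp (real N * K)"
      using mA mB unfolding B_def by (metis exp_le_cancel_iff exp_ln divide_pos_pos)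
    have Qd: "Qv - real N = (\<Sum>i<N. (g (fst (z i)))\<^sup>2 - 1)"
      unfolding Qv_def by (simp add: sum_subtractf)
    have e1: "2 * sqrt W * \<bar>Sv\<bar> \<le> \<nu> / 2 * real N"
    proof -
      have "sqrt W * \<bar>Sv\<bar> \<le> sqrt W * (\<delta> * real N)"
        using S unfolding Sv_def by (rule mult_left_mono) (simp add: W0)
      also have "\<dots> = (sqrt W * \<delta>) * real N" by simp
      also have "\<dots> \<le> \<nu> / 4 * real N" using d(2) by (rule mult_right_mono) simp
      finally show ?thesis by simp
    qed
    have e2: "(wp - wm) * (Qv - real N) \<le> \<nu> / 4 * real N"
    proof -
      have "(wp - wm) * (Qv - real N) \<le> \<bar>(wp - wm) * (Qv - real N)\<bar>"
        by (rule abs_ge_self)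
      also have "\<dots> = \<bar>wp - wm\<bar> * \<bar>Qv - real N\<bar>" by (rule abs_mult)
      also have "\<dots> \<le> W * (\<delta> * real N)"
      proof (rule mult_mono)
        show "\<bar>wp - wm\<bar> \<le> W" using wp(2,3) wm(2,3) by (simp add: abs_le_iff)
        show "\<bar>Qv - real N\<bar> \<le> \<delta> * real N" unfolding Qd by (rule Q)
      qed (use W0 in simp_all)
      also have "\<dots> = (W * \<delta>) * real N" by simp
      also have "\<dots> \<le> \<nu> / 4 * real N" using d(3) by (rule mult_right_mono) simp
      finally show ?thesis .
    qed
    have "a * measure Pr A / (b * measure Pr B) = (a / b) * (measure Pr A / measure Pr B)"
      by simp
    also have "\<dots> \<le> exp (2 * sqrt W * \<bar>Sv\<bar> + (wp - wm) * Qv / 2) * exp (real N * K)"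
      unfolding ab by (rule mult_left_mono[OF rat]) simp
    also have "\<dots> = exp (2 * sqrt W * \<bar>Sv\<bar> + (wp - wm) * (Qv - real N) / 2 - 2 * \<nu> * real N)"
    proof -
      have eqk: "2 * sqrt W * \<bar>Sv\<bar> + (wp - wm) * Qv / 2 + real N * K
        = 2 * sqrt W * \<bar>Sv\<bar> + (wp - wm) * (Qv - real N) / 2 - 2 * \<nu> * real N"
        unfolding K_def by (simp add: field_simps)
      show ?thesis unfolding eqk[symmetric] by (rule exp_add[symmetric])
    qed
    also have "\<dots> \<le> exp (- \<nu> * real N)"
    proof -
      have "0 \<le> \<nu> * real N" using nu by simp
      then show ?thesis using e1 e2 by simp
    qed
    finally show ?thesis using rb unfolding A_def B_def by linarith
  qed
qed
lemma part_ii_det: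
  fixes Pr :: "(nat \<Rightarrow> real) measure" and g :: "'x \<Rightarrow> real" and N :: nat
  assumes Pr: "prob_space Pr" and sPr: "sets Pr = sets borel"
    and w_cont: "continuous_on {0..} w"
    and w_range: "\<forall>u\<ge>0. 0 \<le> w u \<and> w u \<le> W"
    and mono: "mono_on {0..} w"
    and L: "L > 0" and nu: "\<nu> > 0" and NL: "2 \<le> \<nu> * real N"
    and mB: "measure Pr (Theta D \<sigma> \<epsilon>) > 0"
    and hyp: "measure Pr (BallC D L) = 0 \<or>
         ln (measure Pr (BallC D L) / measure Pr (Theta D \<sigma> \<epsilon>)) / real N \<le> - 2 * \<nu>"
    and S: "\<bar>\<Sum>i<N. snd (z i) * g (fst (z i))\<bar> \<le> \<delta> * real N"
    and d: "0 \<le> \<delta>" "sqrt W * \<delta> \<le> \<nu> / 4"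
  shows "posterior w g D N Pr z (BallC D L) / posterior w g D N Pr z (Theta D \<sigma> \<epsilon>) \<le> exp (- \<nu> * real N)"
proof -
  interpret P: prob_space Pr by (rule Pr)
  define Sv where "Sv = (\<Sum>i<N. snd (z i) * g (fst (z i)))"
  define Qv where "Qv = (\<Sum>i<N. (g (fst (z i)))\<^sup>2)"
  define C where "C = -(1/2) * (\<Sum>i<N. (snd (z i))\<^sup>2)"
  define wL where "wL = w L"
  define A where "A = BallC D L"
  define B where "B = Theta D \<sigma> \<epsilon>"
  define B' where "B' = B - A"
  define f where "f = (\<lambda>\<theta>. exp (loglik w g D N z \<theta>))"
  define a where "a = exp (C + sqrt W * \<bar>Sv\<bar> - wL * Qv / 2)"
  define b where "b = exp (C - sqrt W * \<bar>Sv\<bar> - wL * Qv / 2)"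
  have W0: "0 \<le> W" using w_range[rule_format, of 0] by simp
  have wN: "0 \<le> w (normD D \<theta>)" "w (normD D \<theta>) \<le> W" for \<theta>
    using w_range[rule_format, OF normD_nonneg[of D \<theta>]] by simp_all
  have wL: "0 \<le> wL" "wL \<le> W" unfolding wL_def using w_range[rule_format, of L] L by simp_all
  have N: "N > 0" using NL nu by (cases N) auto
  have fm: "f \<in> borel_measurable Pr"
    unfolding f_def measurable_cong_sets[OF sPr refl] by (rule loglik_meas[OF w_cont])
  have f01: "0 \<le> f \<theta> \<and> f \<theta> \<le> 1" for \<theta>
    unfolding f_def using loglik_le0[of w g D N z \<theta>] by simp
  have As: "A \<in> sets Pr" unfolding A_def sPr by (rule BallC_sets)
  have Bs: "B \<in> sets Pr" unfolding B_def sPr by (rule Theta_sets)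
  have B's: "B' \<in> sets Pr" unfolding B'_def using As Bs by (rule sets.Diff[rotated])
  have fa: "f \<theta> \<le> a" if "\<theta> \<in> A" for \<theta>
  proof -
    have r: "L < normD D \<theta>" using that by (simp add: A_def BallC_def)
    have m: "wL \<le> w (normD D \<theta>)" unfolding wL_def
      by (rule mono_onD[OF mono]) (use r L normD_nonneg[of D \<theta>] in simp_all)
    have "loglik w g D N z \<theta> \<le> C + sqrt W * \<bar>Sv\<bar> - wL * Qv / 2"
      unfolding C_def Sv_def Qv_def
      by (rule loglik_upper[where lo=wL and w=w and D=D and \<theta>=\<theta> and W=W, OF wL(1) m wN(2)])
    then show ?thesis unfolding f_def a_def by simp
  qed
  have fb: "b \<le> f \<theta>" if "\<theta> \<in> B'" for \<theta>
  proof -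
    have r: "normD D \<theta> \<le> L" using that by (simp add: B'_def A_def BallC_def)
    have m: "w (normD D \<theta>) \<le> wL" unfolding wL_def
      by (rule mono_onD[OF mono]) (use r L normD_nonneg[of D \<theta>] in simp_all)
    have "C - sqrt W * \<bar>Sv\<bar> - wL * Qv / 2 \<le> loglik w g D N z \<theta>"
      unfolding C_def Sv_def Qv_def
      by (rule loglik_lower[where hi=wL and w=w and D=D and \<theta>=\<theta> and W=W, OF wN(1) m wL(2)])
    then show ?thesis unfolding f_def b_def by simp
  qed
  have e2: "exp (2 * \<nu> * real N) \<ge> 2" and eh: "exp (\<nu> * real N / 2) \<ge> 2"
    using exp_ge_add_one_self[of "2 * \<nu> * real N"] exp_ge_add_one_self[of "\<nu> * real N / 2"] NL by linarith+
  have mB0: "measure Pr B > 0" using mB unfolding B_def .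
  have mA0: "0 \<le> measure Pr A" by simp
  have mAB: "measure Pr A \<le> exp (- 2 * \<nu> * real N) * measure Pr B"
  proof (cases "measure Pr A = 0")
    case True then show ?thesis using mB0 by simp
  next
    case False
    then have mA: "measure Pr A > 0" using mA0 by linarith
    have "ln (measure Pr A / measure Pr B) / real N \<le> - 2 * \<nu>"
      using hyp False unfolding A_def B_def by auto
    then have "ln (measure Pr A / measure Pr B) \<le> - 2 * \<nu> * real N"
      using N by (simp add: divide_le_eq mult.commute)
    then have "measure Pr A / measure Pr B \<le> exp (- 2 * \<nu> * real N)"
      using mA mB0 by (metis exp_le_cancel_iff exp_ln divide_pos_pos)
    then show ?thesis using mB0 by (simp add: divide_le_eq)
  qed
  have half: "exp (- 2 * \<nu> * real N) \<le> 1/2"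
  proof -
    have "exp (- 2 * \<nu> * real N) = 1 / exp (2 * \<nu> * real N)" by (simp add: exp_minus field_simps)
    also have "\<dots> \<le> 1/2" using e2 by (simp add: divide_le_eq)
    finally show ?thesis .
  qed
  have mB': "measure Pr B / 2 \<le> measure Pr B'"
  proof -
    have "measure Pr B' = measure Pr B - measure Pr (B \<inter> A)"
      unfolding B'_def by (rule P.finite_measure_Diff'[OF Bs As])
    moreover have "measure Pr (B \<inter> A) \<le> measure Pr A"
      by (rule P.finite_measure_mono) (use As in auto)
    moreover have "measure Pr A \<le> measure Pr B / 2"
    proof -
      have "exp (- 2 * \<nu> * real N) * measure Pr B \<le> 1/2 * measure Pr B"
        by (rule mult_right_mono[OF half]) simp
      then show ?thesis using mAB by simp
    qed
    ultimately show ?thesis by linarith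
  qed
  have mB'0: "measure Pr B' > 0" using mB' mB0 by linarith
  have rb: "posterior w g D N Pr z A / posterior w g D N Pr z B \<le> a * measure Pr A / (b * measure Pr B')"
    unfolding posterior_def f_def[symmetric]
    by (rule ratio_bound[OF Pr fm f01 As Bs B's _ fa _ fb _ mB'0]) (auto simp: a_def b_def B'_def)
  have ab: "a / b = exp (2 * sqrt W * \<bar>Sv\<bar>)"
  proof -
    have "a / b = exp ((C + sqrt W * \<bar>Sv\<bar> - wL * Qv / 2) - (C - sqrt W * \<bar>Sv\<bar> - wL * Qv / 2))"
      unfolding a_def b_def by (rule exp_diff[symmetric])
    also have "(C + sqrt W * \<bar>Sv\<bar> - wL * Qv / 2) - (C - sqrt W * \<bar>Sv\<bar> - wL * Qv / 2)
       = 2 * sqrt W * \<bar>Sv\<bar>"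
      by (simp add: field_simps)
    finally show ?thesis .
  qed
  have e1: "2 * sqrt W * \<bar>Sv\<bar> \<le> \<nu> * real N / 2"
  proof -
    have "sqrt W * \<bar>Sv\<bar> \<le> sqrt W * (\<delta> * real N)"
      using S unfolding Sv_def by (rule mult_left_mono) (simp add: W0)
    also have "\<dots> = (sqrt W * \<delta>) * real N" by simp
    also have "\<dots> \<le> \<nu> / 4 * real N" using d(2) by (rule mult_right_mono) simp
    finally show ?thesis by simp
  qed
  have q: "measure Pr A / measure Pr B' \<le> 2 * exp (- 2 * \<nu> * real N)"
  proof -
    have "measure Pr A / measure Pr B' \<le> measure Pr A / (measure Pr B / 2)"
      by (rule divide_left_mono[OF mB' mA0]) (use mB0 mB'0 in simp)
    also have "\<dots> = 2 * (measure Pr A / measure Pr B)" by simp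
    also have "\<dots> \<le> 2 * exp (- 2 * \<nu> * real N)"
      using mAB mB0 by (simp add: divide_le_eq)
    finally show ?thesis .
  qed
  have "a * measure Pr A / (b * measure Pr B') = (a / b) * (measure Pr A / measure Pr B')"
    by simp
  also have "\<dots> \<le> exp (\<nu> * real N / 2) * (2 * exp (- 2 * \<nu> * real N))"
    unfolding ab by (rule mult_mono) (use e1 q in simp_all)
  also have "\<dots> \<le> exp (\<nu> * real N / 2) * (exp (\<nu> * real N / 2) * exp (- 2 * \<nu> * real N))"
    using eh by (intro mult_left_mono mult_right_mono) simp_all
  also have "\<dots> = exp (- \<nu> * real N)"
    by (simp add: exp_add[symmetric] field_simps)
  finally show ?thesis using rb unfolding A_def B_def by linarith
qed
lemma whp_eventually:
  assumes "\<forall>N. E0 N \<in> sets (P N)" "(\<lambda>N. measure (P N) (E0 N)) \<longlonglongrightarrow> 1"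
    and "eventually (\<lambda>N. \<forall>z\<in>E0 N. Q N z) sequentially"
  shows "whp P Q"
proof -
  from assms(3) obtain N0 where N0: "\<And>N. N \<ge> N0 \<Longrightarrow> \<forall>z\<in>E0 N. Q N z"
    by (auto simp: eventually_sequentially)
  define E where "E = (\<lambda>N. if N \<ge> N0 then E0 N else {})"
  have "\<forall>N. E N \<in> sets (P N) \<and> (\<forall>z\<in>E N. Q N z)"
    using assms(1) N0 by (auto simp: E_def)
  moreover have "(\<lambda>N. measure (P N) (E N)) \<longlonglongrightarrow> 1"
  proof -
    have "eventually (\<lambda>N. measure (P N) (E0 N) = measure (P N) (E N)) sequentially"
      using eventually_ge_at_top[of N0] by eventually_elim (simp add: E_def)
    then have "((\<lambda>N. measure (P N) (E0 N)) \<longlongrightarrow> 1) sequentially \<longleftrightarrow> ((\<lambda>N. measure (P N) (E N)) \<longlongrightarrow> 1) sequentially"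
      by (rule tendsto_cong)
    then show ?thesis using assms(2) by simp
  qed
  ultimately show ?thesis unfolding whp_def by blast
qed
theorem proposition4p2:
  fixes X :: "'x::euclidean_space set"
    and g :: "'x \<Rightarrow> real" and gmin gmax :: real
    and w :: "real \<Rightarrow> real" and W :: real
    and D :: "nat \<Rightarrow> nat"
    and Pr :: "nat \<Rightarrow> (nat \<Rightarrow> real) measure"
    and s \<sigma> \<epsilon> \<eta> \<nu> :: real
  assumes X_meas: "X \<in> sets lborel" and X_bdd: "bounded X" and X_vol: "emeasure lborel X = 1"
    and g_meas: "g \<in> borel_measurable lborel"
    and g_range: "\<forall>x\<in>X. gmin \<le> g x \<and> g x \<le> gmax"
    and g_consts: "0 < gmin" "gmin < gmax"
    and g_L2: "(LINT x:X|lborel. (g x)\<^sup>2) = 1"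
    and w_cont: "continuous_on {0..} w"
    and w_range: "\<forall>u\<ge>0. 0 \<le> w u \<and> w u \<le> W"
    and w_zero: "w 0 = 0" and w_unique_min: "\<forall>u>0. w u > 0"
    and prior: "\<forall>N. prob_space (Pr N) \<and> sets (Pr N) = sets borel"
    and prior_dim: "\<forall>N. AE \<theta> in Pr N. \<forall>i\<ge>D N. \<theta> i = 0"
    and radii: "0 < s" "s < \<sigma>"
    and params_pos: "\<epsilon> > 0" "\<eta> > 0" "\<nu> > 0"
    and hyp_i: "eventually (\<lambda>N. measure (Pr N) (Theta (D N) \<sigma> \<epsilon>) > 0 \<and>
        (measure (Pr N) (Theta (D N) s \<eta>) = 0 \<or>
         ln (measure (Pr N) (Theta (D N) s \<eta>) / measure (Pr N) (Theta (D N) \<sigma> \<epsilon>)) / real N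
           \<le> - 2 * \<nu> - (w_plus w \<sigma> \<epsilon> - w_minus w s \<eta>) / 2)) sequentially"
  shows
    "whp (P0N X) (\<lambda>N z. posterior w g (D N) N (Pr N) z (Theta (D N) s \<eta>)
         / posterior w g (D N) N (Pr N) z (Theta (D N) \<sigma> \<epsilon>) \<le> exp (- \<nu> * real N))
     \<and> (mono_on {0..} w \<longrightarrow>
        (\<forall>L. L > 1 + \<epsilon> \<and>
           eventually (\<lambda>N. measure (Pr N) (Theta (D N) \<sigma> \<epsilon>) > 0 \<and>
             (measure (Pr N) (BallC (D N) L) = 0 \<or>
              ln (measure (Pr N) (BallC (D N) L) / measure (Pr N) (Theta (D N) \<sigma> \<epsilon>)) / real N
                \<le> - 2 * \<nu>)) sequentially
         \<longrightarrow> whp (P0N X) (\<lambda>N z. posterior w g (D N) N (Pr N) z (BallC (D N) L)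
               / posterior w g (D N) N (Pr N) z (Theta (D N) \<sigma> \<epsilon>) \<le> exp (- \<nu> * real N))))"
proof -
  have W0: "0 \<le> W" using w_range[rule_format, of 0] by simp
  define \<delta> where "\<delta> = \<nu> / (4 * (sqrt W + W + 1))"
  have den: "0 < sqrt W + W + 1" using W0 by (simp add: add_nonneg_pos)
  have d0: "0 < \<delta>" unfolding \<delta>_def using params_pos(3) den by simp
  have dd: "\<delta> * (sqrt W + W + 1) = \<nu> / 4" unfolding \<delta>_def using den by (simp add: field_simps)
  have d1: "sqrt W * \<delta> \<le> \<nu> / 4"
  proof -
    have "sqrt W * \<delta> \<le> (sqrt W + W + 1) * \<delta>" using W0 d0 by (intro mult_right_mono) simp_all
    then show ?thesis using dd by (simp add: mult.commute)
  qed
  have d2: "W * \<delta> \<le> \<nu> / 4"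
  proof -
    have "W * \<delta> \<le> (sqrt W + W + 1) * \<delta>" using W0 d0 by (intro mult_right_mono) simp_all
    then show ?thesis using dd by (simp add: mult.commute)
  qed
  obtain E0 where E0: "\<forall>N. E0 N \<in> sets (P0N X N) \<and> (\<forall>z\<in>E0 N. \<bar>\<Sum>i<N. snd (z i) * g (fst (z i))\<bar> \<le> \<delta> * real N
              \<and> \<bar>\<Sum>i<N. (g (fst (z i)))\<^sup>2 - 1\<bar> \<le> \<delta> * real N)"
      and lim: "(\<lambda>N. measure (P0N X N) (E0 N)) \<longlonglongrightarrow> 1"
    using event_prob[OF X_meas X_vol g_meas g_range g_L2 d0] by blast
  have E0s: "\<forall>N. E0 N \<in> sets (P0N X N)" using E0 by blast
  have PrN: "prob_space (Pr N)" "sets (Pr N) = sets borel" for N using prior by auto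
  have part1: "whp (P0N X) (\<lambda>N z. posterior w g (D N) N (Pr N) z (Theta (D N) s \<eta>)
         / posterior w g (D N) N (Pr N) z (Theta (D N) \<sigma> \<epsilon>) \<le> exp (- \<nu> * real N))"
  proof (rule whp_eventually[OF E0s lim])
    show "\<forall>\<^sub>F N in sequentially. \<forall>z\<in>E0 N. posterior w g (D N) N (Pr N) z (Theta (D N) s \<eta>)
         / posterior w g (D N) N (Pr N) z (Theta (D N) \<sigma> \<epsilon>) \<le> exp (- \<nu> * real N)"
      using hyp_i eventually_gt_at_top[of 0]
    proof eventually_elim
      case (elim N)
      show ?case
      proof
        fix z assume z: "z \<in> E0 N"
        show "posterior w g (D N) N (Pr N) z (Theta (D N) s \<eta>)
           / posterior w g (D N) N (Pr N) z (Theta (D N) \<sigma> \<epsilon>) \<le> exp (- \<nu> * real N)"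
          by (rule part_i_det[OF PrN w_cont w_range radii params_pos elim(2) conjunct1[OF elim(1)]
                conjunct2[OF elim(1)] _ _ less_imp_le[OF d0] d1 d2])
             (use E0 z in blast)+
      qed
    qed
  qed
  have part2: "whp (P0N X) (\<lambda>N z. posterior w g (D N) N (Pr N) z (BallC (D N) L)
               / posterior w g (D N) N (Pr N) z (Theta (D N) \<sigma> \<epsilon>) \<le> exp (- \<nu> * real N))"
    if mono: "mono_on {0..} w" and L: "L > 1 + \<epsilon>"
      and hyp2: "eventually (\<lambda>N. measure (Pr N) (Theta (D N) \<sigma> \<epsilon>) > 0 \<and>
             (measure (Pr N) (BallC (D N) L) = 0 \<or>
              ln (measure (Pr N) (BallC (D N) L) / measure (Pr N) (Theta (D N) \<sigma> \<epsilon>)) / real N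
                \<le> - 2 * \<nu>)) sequentially" for L
  proof (rule whp_eventually[OF E0s lim])
    have L0: "L > 0" using L params_pos by linarith
    have ev: "eventually (\<lambda>N. 2 \<le> \<nu> * real N) sequentially"
      using eventually_ge_at_top[of "nat \<lceil>2 / \<nu>\<rceil>"]
    proof eventually_elim
      case (elim N)
      then have "2 / \<nu> \<le> real N" by linarith
      then show ?case using params_pos(3) by (simp add: divide_le_eq mult.commute)
    qed
    show "\<forall>\<^sub>F N in sequentially. \<forall>z\<in>E0 N. posterior w g (D N) N (Pr N) z (BallC (D N) L)
               / posterior w g (D N) N (Pr N) z (Theta (D N) \<sigma> \<epsilon>) \<le> exp (- \<nu> * real N)"
      using hyp2 ev
    proof eventually_elim
      case (elim N)
      show ?case
      proof
        fix z assume z: "z \<in> E0 N"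
        show "posterior w g (D N) N (Pr N) z (BallC (D N) L)
           / posterior w g (D N) N (Pr N) z (Theta (D N) \<sigma> \<epsilon>) \<le> exp (- \<nu> * real N)"
          by (rule part_ii_det[OF PrN w_cont w_range mono L0 params_pos(3) elim(2)
                conjunct1[OF elim(1)] conjunct2[OF elim(1)] _ less_imp_le[OF d0] d1])
             (use E0 z in blast)
      qed
    qed
  qed
  show ?thesis using part1 part2 by blast
qed
end
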